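(* Let $r\ge1$ and let $\tau,\tau'$ be permutations of $F^r$ fixing $\mathbf 0$, such that $S_\tau$ and $S_{\tau'}$ are transitive codes of length $2^{r+1}$. Then there exist a vector $x\in F^{2^{r+1}}$ and a permutation $\pi$ of coordinates with $x+\pi(S_\tau)=S_{\tau'}$ if and only if there exists a permutation $\pi'$ of the points with $SQS_\tau\sim_{\pi'}SQS_{\tau'}$.
   Context: $F=\mathrm{GF}(2)$, $\mathbf 0$ is the all-zero vector. Index the coordinates of $F^{2^r}$ by the vectors of $F^r$; $e_a$ is the unit vector at position $a$. $\mathcal H=\{x\in F^{2^r}:\sum_{a:x_a=1}a=\mathbf 0,\ \mathrm{wt}(x)\text{ even}\}$ is the extended Hamming code. For $x,y\in F^{2^r}$, $x|y$ is the concatenation and $C\times D=\{x|y:x\in C,y\in D\}$. $S_\tau=\bigcup_{a\in F^r}(\mathcal H+e_a+e_{\mathbf 0})\times(\mathcal H+e_{\tau(a)}+e_{\tau(\mathbf 0)})\subseteq F^{2^{r+1}}$. Coordinate positions of $F^{2^{r+1}}$ are denoted $(\{a\},\emptyset)$ (first half) and $(\emptyset,\{a\})$ (second half); $(X,Y)$ denotes the set of positions $\{(\{x\},\emptyset):x\in X\}\cup\{(\emptyset,\{y\}):y\in Y\}$. $SQS_\tau$ consists of the quadruples $Q_0=\{(\{a,b,c,d\},\emptyset): a,b,c,d \text{ pairwise distinct}, a+b+c+d=\mathbf 0\}$, $Q_1=\{(\emptyset,\{a,b,c,d\}): \text{same condition}\}$, $Q_\tau=\{(\{a,c\},\{b,d\}):\tau(a+c)=b+d\neq\mathbf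 0\}$. $SQS_\tau\sim_{\pi'}SQS_{\tau'}$ means $\pi'$ maps the quadruples of $SQS_\tau$ onto those of $SQS_{\tau'}$. Permutations act on vectors by $\pi(y)_i=y_{\pi^{-1}(i)}$. A code $C$ is transitive if the group $\{y\mapsto x+\pi(y)\}$ stabilizer $\mathrm{Aut}(C)$ of $C$ has a subgroup acting transitively on $C$. *)

theory Defs
  imports Main
begin

text \<open>A vector of F^r (F = GF(2)) is represented by its support,
a subset of {0..<r}; addition is symmetric difference, the zero vector is {}.
A binary vector of length 2^r whose coordinates are indexed by F^r is likewise
represented by its support, a set of points of F^r. Coordinates of F^(2^(r+1))
are Inl a (first half, position ({a},{})) and Inr a (second half, position ({},{a})).\<close>

definition vadd :: "'a set \<Rightarrow> 'a set \<Rightarrow> 'a set" where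
  "vadd A B = (A - B) \<union> (B - A)"

definition pts :: "nat \<Rightarrow> nat set set" where
  "pts r = {A. A \<subseteq> {..<r}}"

definition coords :: "nat \<Rightarrow> (nat set + nat set) set" where
  "coords r = Inl ` pts r \<union> Inr ` pts r"

text \<open>sum of the points a with x_a = 1 (coordinatewise XOR)\<close>
definition vsum :: "nat set set \<Rightarrow> nat set" where
  "vsum x = {i. odd (card {a \<in> x. i \<in> a})}"

definition hamming :: "nat \<Rightarrow> nat set set set" where
  "hamming r = {x. x \<subseteq> pts r \<and> finite x \<and> vsum x = {} \<and> even (card x)}"

definition concat :: "nat set set \<Rightarrow> nat set set \<Rightarrow> (nat set + nat set) set" where
  "concat x y = Inl ` x \<union> Inr ` y"

definition hcoset :: "nat \<Rightarrow> nat set \<Rightarrow> nat set \<Rightarrow> nat set set set" where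
  "hcoset r a b = (\<lambda>h. vadd (vadd h {a}) {b}) ` hamming r"

definition S_code :: "nat \<Rightarrow> (nat set \<Rightarrow> nat set) \<Rightarrow> (nat set + nat set) set set" where
  "S_code r \<tau> = (\<Union>a\<in>pts r. {concat x y | x y. x \<in> hcoset r a {} \<and> y \<in> hcoset r (\<tau> a) (\<tau> {})})"

text \<open>the map y \<mapsto> x + \<pi>(y), where \<pi>(y)_i = y_{\<pi>^{-1}(i)}, i.e. supp \<pi>(y) = \<pi> ` supp y\<close>
definition isom_map :: "'p set \<Rightarrow> ('p \<Rightarrow> 'p) \<Rightarrow> 'p set \<Rightarrow> 'p set" where
  "isom_map x \<pi> y = vadd x (\<pi> ` y)"

text \<open>Aut(C) = {y \<mapsto> x + \<pi>(y) stabilizing C}; C is transitive if a subgroup of Aut(C)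
acts transitively on C, i.e. (taking the whole group) Aut(C) acts transitively on C.\<close>
definition transitive_code :: "nat \<Rightarrow> (nat set + nat set) set set \<Rightarrow> bool" where
  "transitive_code r C \<longleftrightarrow>
     (\<forall>c\<in>C. \<forall>d\<in>C. \<exists>x \<pi>. x \<subseteq> coords r \<and> bij_betw \<pi> (coords r) (coords r)
        \<and> isom_map x \<pi> ` C = C \<and> isom_map x \<pi> c = d)"

definition Q0 :: "nat \<Rightarrow> (nat set + nat set) set set" where
  "Q0 r = {Inl ` {a, b, c, d} | a b c d. a \<in> pts r \<and> b \<in> pts r \<and> c \<in> pts r \<and> d \<in> pts r
      \<and> a \<noteq> b \<and> a \<noteq> c \<and> a \<noteq> d \<and> b \<noteq> c \<and> b \<noteq> d \<and> c \<noteq> d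
      \<and> vadd (vadd a b) (vadd c d) = {}}"

definition Q1 :: "nat \<Rightarrow> (nat set + nat set) set set" where
  "Q1 r = {Inr ` {a, b, c, d} | a b c d. a \<in> pts r \<and> b \<in> pts r \<and> c \<in> pts r \<and> d \<in> pts r
      \<and> a \<noteq> b \<and> a \<noteq> c \<and> a \<noteq> d \<and> b \<noteq> c \<and> b \<noteq> d \<and> c \<noteq> d
      \<and> vadd (vadd a b) (vadd c d) = {}}"

definition Qtau :: "nat \<Rightarrow> (nat set \<Rightarrow> nat set) \<Rightarrow> (nat set + nat set) set set" where
  "Qtau r \<tau> = {Inl ` {a, c} \<union> Inr ` {b, d} | a b c d. a \<in> pts r \<and> b \<in> pts r \<and> c \<in> pts r \<and> d \<in> pts r
      \<and> \<tau> (vadd a c) = vadd b d \<and> vadd b d \<noteq> {}}"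

definition SQS :: "nat \<Rightarrow> (nat set \<Rightarrow> nat set) \<Rightarrow> (nat set + nat set) set set" where
  "SQS r \<tau> = Q0 r \<union> Q1 r \<union> Qtau r \<tau>"

end

theory Submission
  imports Defs
begin

lemma vadd_empty[simp]: "vadd A {} = A" "vadd {} A = A" "vadd A A = {}"
  by (auto simp: vadd_def)
lemma vadd_comm: "vadd A B = vadd B A" by (auto simp: vadd_def)
lemma vadd_assoc: "vadd (vadd A B) C = vadd A (vadd B C)" by (auto simp: vadd_def)
lemma vadd_left: "vadd A (vadd A B) = B" by (auto simp: vadd_def)
lemma vadd_cancel: "vadd a x = vadd a y \<Longrightarrow> x = y" by (metis vadd_left)
lemma vadd_eq_empty: "vadd x y = {} \<longleftrightarrow> x = y" by (auto simp: vadd_def)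
lemma vadd_sub: "vadd A B \<subseteq> A \<union> B" by (auto simp: vadd_def)

lemma pts_eq: "pts r = Pow {..<r}" by (auto simp: pts_def)
lemma finite_pts[simp]: "finite (pts r)" by (simp add: pts_eq)
lemma empty_pts[simp]: "{} \<in> pts r" by (simp add: pts_def)
lemma vadd_pts: "a \<in> pts r \<Longrightarrow> b \<in> pts r \<Longrightarrow> vadd a b \<in> pts r"
  by (auto simp: pts_def vadd_def)

lemma card_vadd: "finite A \<Longrightarrow> finite B \<Longrightarrow> card (vadd A B) + 2 * card (A \<inter> B) = card A + card B"
proof -
  assume f: "finite A" "finite B"
  have e: "vadd A B = (A - B) \<union> (B - A)" by (simp add: vadd_def)
  have "card ((A - B) \<union> (B - A)) = card (A - B) + card (B - A)"
    by (rule card_Un_disjoint) (use f in auto)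
  moreover have "card (A - B) = card A - card (A \<inter> B)"
    using f by (simp add: card_Diff_subset_Int)
  moreover have "card (B - A) = card B - card (A \<inter> B)"
    using f by (simp add: card_Diff_subset_Int Int_commute)
  moreover have "card (A \<inter> B) \<le> card A" using f by (simp add: card_mono)
  moreover have "card (A \<inter> B) \<le> card B" using f by (simp add: card_mono)
  ultimately show ?thesis unfolding e by linarith
qed

lemma even_card_vadd: "finite A \<Longrightarrow> finite B \<Longrightarrow> even (card (vadd A B)) \<longleftrightarrow> (even (card A) \<longleftrightarrow> even (card B))"
proof -
  assume f: "finite A" "finite B"
  have "even (card (vadd A B) + 2 * card (A \<inter> B)) = even (card A + card B)"
    by (simp only: card_vadd[OF f])
  then show ?thesis by simp
qed

lemma vadd_iff: "i \<in> vadd P Q \<longleftrightarrow> (i \<in> P) \<noteq> (i \<in> Q)" by (auto simp: vadd_def)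

lemma vsum_iff: "i \<in> vsum z \<longleftrightarrow> odd (card {b\<in>z. i\<in>b})" by (simp add: vsum_def)

lemma vsum_empty[simp]: "vsum {} = {}" by (simp add: vsum_def)

lemma vsum_insert: "finite x \<Longrightarrow> a \<notin> x \<Longrightarrow> vsum (insert a x) = vadd a (vsum x)"
proof (rule set_eqI)
  fix i assume f: "finite x" "a \<notin> x"
  show "i \<in> vsum (insert a x) \<longleftrightarrow> i \<in> vadd a (vsum x)"
  proof (cases "i \<in> a")
    case True
    then have "{b\<in>insert a x. i\<in>b} = insert a {b\<in>x. i\<in>b}" by blast
    moreover have "card (insert a {b\<in>x. i\<in>b}) = Suc (card {b\<in>x. i\<in>b})"
      using f by simp
    ultimately show ?thesis using True by (simp add: vsum_iff vadd_iff)
  next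
    case False
    then have "{b\<in>insert a x. i\<in>b} = {b\<in>x. i\<in>b}" by blast
    then show ?thesis using False by (simp add: vsum_iff vadd_iff)
  qed
qed

lemma vsum_single[simp]: "vsum {a} = a" using vsum_insert[of "{}" a] by simp

lemma vsum_two: "a \<noteq> b \<Longrightarrow> vsum {a, b} = vadd a b" by (simp add: vsum_insert)

lemma vsum_four: "a \<noteq> b \<Longrightarrow> a \<noteq> c \<Longrightarrow> a \<noteq> d \<Longrightarrow> b \<noteq> c \<Longrightarrow> b \<noteq> d \<Longrightarrow> c \<noteq> d
  \<Longrightarrow> vsum {a, b, c, d} = vadd (vadd a b) (vadd c d)"
  by (simp add: vsum_insert vadd_assoc)

lemma vsum_vadd: "finite x \<Longrightarrow> finite y \<Longrightarrow> vsum (vadd x y) = vadd (vsum x) (vsum y)"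
proof (rule set_eqI)
  fix i assume f: "finite x" "finite y"
  have "{b\<in>vadd x y. i\<in>b} = vadd {b\<in>x. i\<in>b} {b\<in>y. i\<in>b}" by (auto simp: vadd_def)
  then show "i \<in> vsum (vadd x y) \<longleftrightarrow> i \<in> vadd (vsum x) (vsum y)"
    using f even_card_vadd[of "{b\<in>x. i\<in>b}" "{b\<in>y. i\<in>b}"]
    by (simp add: vsum_iff vadd_iff)
qed

lemma vsum_pts: "x \<subseteq> pts r \<Longrightarrow> vsum x \<in> pts r"
proof -
  assume x: "x \<subseteq> pts r"
  { fix i assume "i \<in> vsum x"
    then have "odd (card {b\<in>x. i\<in>b})" by (simp add: vsum_iff)
    then have "{b\<in>x. i\<in>b} \<noteq> {}" by (metis card.empty even_zero)
    then obtain b where "b \<in> x" "i \<in> b" by auto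
    with x have "i < r" by (auto simp: pts_def) }
  then show ?thesis by (auto simp: pts_def)
qed

definition Lp :: "('a + 'a) set \<Rightarrow> 'a set" where "Lp c = {p. Inl p \<in> c}"
definition Rp :: "('a + 'a) set \<Rightarrow> 'a set" where "Rp c = {p. Inr p \<in> c}"

lemma decomp: "c = Inl ` Lp c \<union> Inr ` Rp c"
proof (rule set_eqI)
  fix z show "z \<in> c \<longleftrightarrow> z \<in> Inl ` Lp c \<union> Inr ` Rp c"
    by (cases z) (auto simp: Lp_def Rp_def)
qed

lemma Lp_conc[simp]: "Lp (Inl ` A \<union> Inr ` B) = A" "Rp (Inl ` A \<union> Inr ` B) = B"
  "Lp (Inl ` A) = A" "Rp (Inl ` A) = {}" "Lp (Inr ` A) = {}" "Rp (Inr ` A) = A"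
  by (auto simp: Lp_def Rp_def)

lemma Lp_vadd: "Lp (vadd A B) = vadd (Lp A) (Lp B)" "Rp (vadd A B) = vadd (Rp A) (Rp B)"
  by (auto simp: Lp_def Rp_def vadd_def)

lemma sub_coords: "c \<subseteq> coords r \<longleftrightarrow> Lp c \<subseteq> pts r \<and> Rp c \<subseteq> pts r"
proof
  assume "c \<subseteq> coords r" then show "Lp c \<subseteq> pts r \<and> Rp c \<subseteq> pts r"
    by (auto simp: coords_def Lp_def Rp_def)
next
  assume a: "Lp c \<subseteq> pts r \<and> Rp c \<subseteq> pts r"
  show "c \<subseteq> coords r"
  proof
    fix z assume "z \<in> c" then show "z \<in> coords r" using a
      by (cases z) (auto simp: coords_def Lp_def Rp_def)
  qed
qed

lemma finite_coords[simp]: "finite (coords r)" by (simp add: coords_def)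

lemma card_LR: "c \<subseteq> coords r \<Longrightarrow> card c = card (Lp c) + card (Rp c)"
proof -
  assume c: "c \<subseteq> coords r"
  then have f: "finite (Lp c)" "finite (Rp c)" using sub_coords finite_subset finite_pts by metis+
  have "card c = card (Inl ` Lp c \<union> Inr ` Rp c)" using decomp by metis
  also have "\<dots> = card (Lp c) + card (Rp c)"
    by (subst card_Un_disjoint) (auto simp: f card_image)
  finally show ?thesis .
qed

lemma card4:
  assumes c: "card A = 4"
  obtains a b c d where "A = {a,b,c,d}" "a\<noteq>b" "a\<noteq>c" "a\<noteq>d" "b\<noteq>c" "b\<noteq>d" "c\<noteq>d"
proof -
  have "A \<noteq> {}" using c by auto
  then obtain a where a: "a \<in> A" by auto
  have "card A > 0" using c by simp
  then have f: "finite A" by (rule card_ge_0_finite)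
  have "card (A - {a}) = 3" using c a f by simp
  then obtain x y z where e: "A - {a} = {x,y,z}" and n: "x \<noteq> y" "y \<noteq> z" "x \<noteq> z"
    by (auto simp: card_3_iff)
  have h: "A = {a,x,y,z}" "a \<noteq> x" "a \<noteq> y" "a \<noteq> z" using a e by auto
  show thesis by (rule that[OF h(1) h(2) h(3) h(4) n(1) n(3) n(2)])
qed

lemma three_elems:
  assumes "finite A" "3 \<le> card A"
  obtains p q s where "p\<in>A" "q\<in>A" "s\<in>A" "p\<noteq>q" "p\<noteq>s" "q\<noteq>s"
proof -
  obtain T where T: "T \<subseteq> A" "card T = 3" "finite T" using assms(2) by (rule obtain_subset_with_card_n)
  then obtain x y z where e: "T = {x,y,z}" and n: "x \<noteq> y" "y \<noteq> z" "x \<noteq> z" by (auto simp: card_3_iff)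
  have m: "x \<in> A" "y \<in> A" "z \<in> A" using T(1) e by auto
  show thesis by (rule that[OF m n(1) n(3) n(2)])
qed

lemma hcoset_char:
  assumes a: "a \<in> pts r"
  shows "x \<in> hcoset r a {} \<longleftrightarrow> x \<subseteq> pts r \<and> even (card x) \<and> vsum x = a"
proof
  assume "x \<in> hcoset r a {}"
  then obtain h where h: "h \<in> hamming r" and x: "x = vadd (vadd h {a}) {{}}"
    by (auto simp: hcoset_def)
  from h have hp: "h \<subseteq> pts r" "finite h" "vsum h = {}" "even (card h)" by (auto simp: hamming_def)
  have s1: "vadd h {a} \<subseteq> pts r" using vadd_sub[of h "{a}"] hp(1) a by auto
  have s2: "x \<subseteq> pts r" using vadd_sub[of "vadd h {a}" "{{}}"] s1 x by auto
  have f1: "finite (vadd h {a})" using finite_subset[OF s1 finite_pts] .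
  have "even (card x)" using x even_card_vadd[OF f1, of "{{}}"] even_card_vadd[OF hp(2), of "{a}"] hp(4) by simp
  moreover have "vsum x = a" using x vsum_vadd[OF f1, of "{{}}"] vsum_vadd[OF hp(2), of "{a}"] hp(3) by simp
  ultimately show "x \<subseteq> pts r \<and> even (card x) \<and> vsum x = a" using s2 by simp
next
  assume xp: "x \<subseteq> pts r \<and> even (card x) \<and> vsum x = a"
  define h where "h = vadd (vadd x {{}}) {a}"
  have fx: "finite x" using finite_subset[of x "pts r"] xp by simp
  have s1: "vadd x {{}} \<subseteq> pts r" using vadd_sub[of x "{{}}"] xp by auto
  have f1: "finite (vadd x {{}})" using finite_subset[OF s1 finite_pts] .
  have "h \<subseteq> pts r" using vadd_sub[of "vadd x {{}}" "{a}"] s1 a h_def by auto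
  moreover have "finite h" using finite_subset[OF calculation finite_pts] .
  moreover have "even (card h)" using h_def even_card_vadd[OF f1, of "{a}"] even_card_vadd[OF fx, of "{{}}"] xp by simp
  moreover have "vsum h = {}" using h_def vsum_vadd[OF f1, of "{a}"] vsum_vadd[OF fx, of "{{}}"] xp by simp
  ultimately have "h \<in> hamming r" by (simp add: hamming_def)
  moreover have "x = vadd (vadd h {a}) {{}}" by (simp add: h_def vadd_assoc vadd_left)
  ultimately show "x \<in> hcoset r a {}" by (auto simp: hcoset_def)
qed

lemma Lp_empty[simp]: "Lp {} = {}" "Rp {} = {}" by (auto simp: Lp_def Rp_def)
lemma Lp_insert[simp]: "Lp (insert (Inl x) A) = insert x (Lp A)" "Lp (insert (Inr x) A) = Lp A"
  "Rp (insert (Inl x) A) = Rp A" "Rp (insert (Inr x) A) = insert x (Rp A)"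
  by (auto simp: Lp_def Rp_def)

lemma S_char:
  assumes t0: "\<tau> {} = {}" and tp: "\<And>a. a \<in> pts r \<Longrightarrow> \<tau> a \<in> pts r"
  shows "c \<in> S_code r \<tau> \<longleftrightarrow> c \<subseteq> coords r \<and> even (card (Lp c)) \<and> even (card (Rp c))
           \<and> vsum (Rp c) = \<tau> (vsum (Lp c))"
proof
  assume "c \<in> S_code r \<tau>"
  then obtain a x y where a: "a \<in> pts r" and c: "c = concat x y" and x: "x \<in> hcoset r a {}"
    and y: "y \<in> hcoset r (\<tau> a) {}" by (auto simp: S_code_def t0)
  have L: "Lp c = x" "Rp c = y" using c by (auto simp: concat_def)
  show "c \<subseteq> coords r \<and> even (card (Lp c)) \<and> even (card (Rp c)) \<and> vsum (Rp c) = \<tau> (vsum (Lp c))"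
    using hcoset_char[OF a, of x] hcoset_char[OF tp[OF a], of y] x y L by (simp add: sub_coords)
next
  assume h: "c \<subseteq> coords r \<and> even (card (Lp c)) \<and> even (card (Rp c)) \<and> vsum (Rp c) = \<tau> (vsum (Lp c))"
  define a where "a = vsum (Lp c)"
  have a: "a \<in> pts r" using h a_def vsum_pts sub_coords by blast
  have x: "Lp c \<in> hcoset r a {}" using hcoset_char[OF a] h a_def sub_coords by blast
  have y: "Rp c \<in> hcoset r (\<tau> a) {}" using hcoset_char[OF tp[OF a]] h a_def sub_coords by blast
  have "c = concat (Lp c) (Rp c)" unfolding concat_def by (rule decomp)
  then show "c \<in> S_code r \<tau>" using a x y unfolding S_code_def t0 by blast
qed

lemma tau_pts: "bij_betw \<tau> (pts r) (pts r) \<Longrightarrow> a \<in> pts r \<Longrightarrow> \<tau> a \<in> pts r"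
  by (rule bij_betw_apply)

lemma tau_inj: "bij_betw \<tau> (pts r) (pts r) \<Longrightarrow> u \<in> pts r \<Longrightarrow> w \<in> pts r \<Longrightarrow> \<tau> u = \<tau> w \<longleftrightarrow> u = w"
  using bij_betw_imp_inj_on inj_on_eq_iff by metis

lemma tau_zero: "bij_betw \<tau> (pts r) (pts r) \<Longrightarrow> \<tau> {} = {} \<Longrightarrow> u \<in> pts r \<Longrightarrow> \<tau> u = {} \<longleftrightarrow> u = {}"
  using tau_inj[of \<tau> r u "{}"] by simp

lemma SQS_coords: "q \<in> SQS r \<tau> \<Longrightarrow> q \<subseteq> coords r"
  by (auto simp: SQS_def Q0_def Q1_def Qtau_def coords_def)

lemma SQS_S:
  assumes bt: "bij_betw \<tau> (pts r) (pts r)" and t0: "\<tau> {} = {}" and q: "q \<in> SQS r \<tau>"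
  shows "q \<in> S_code r \<tau> \<and> card q = 4"
proof -
  note SC = S_char[of \<tau> r, OF t0 tau_pts[OF bt]]
  have qc: "q \<subseteq> coords r" using q SQS_coords by blast
  have "q \<in> Q0 r \<or> q \<in> Q1 r \<or> q \<in> Qtau r \<tau>" using q by (simp add: SQS_def)
  then show ?thesis
  proof (elim disjE)
    assume "q \<in> Q0 r"
    then obtain a b c d where q: "q = Inl ` {a,b,c,d}" and d: "a \<noteq> b" "a \<noteq> c" "a \<noteq> d" "b \<noteq> c" "b \<noteq> d" "c \<noteq> d"
      and s: "vadd (vadd a b) (vadd c d) = {}" unfolding Q0_def by blast
    have "vsum {a,b,c,d} = {}" using vsum_four[OF d] s by simp
    then show ?thesis using qc q d t0 by (simp add: SC card_LR[OF qc])
  next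
    assume "q \<in> Q1 r"
    then obtain a b c d where q: "q = Inr ` {a,b,c,d}" and d: "a \<noteq> b" "a \<noteq> c" "a \<noteq> d" "b \<noteq> c" "b \<noteq> d" "c \<noteq> d"
      and s: "vadd (vadd a b) (vadd c d) = {}" unfolding Q1_def by blast
    have "vsum {a,b,c,d} = {}" using vsum_four[OF d] s by simp
    then show ?thesis using qc q d t0 by (simp add: SC card_LR[OF qc])
  next
    assume "q \<in> Qtau r \<tau>"
    then obtain a b c d where q: "q = Inl ` {a,c} \<union> Inr ` {b,d}" and p: "a \<in> pts r" "c \<in> pts r"
      and e: "\<tau> (vadd a c) = vadd b d" and nz: "vadd b d \<noteq> {}" unfolding Qtau_def by blast
    have bd: "b \<noteq> d" using nz by auto
    have ac: "a \<noteq> c" using nz e t0 by auto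
    show ?thesis using qc q bd ac e by (simp add: SC card_LR[OF qc] vsum_two)
  qed
qed

lemma small_cases: "even n \<Longrightarrow> n < 4 \<Longrightarrow> n = 0 \<or> n = (2::nat)"
proof -
  assume "even n" "n < 4"
  moreover have "n < 4 \<Longrightarrow> n = 0 \<or> n = 1 \<or> n = 2 \<or> n = 3" by auto
  ultimately show ?thesis by auto
qed

lemma S_small:
  assumes bt: "bij_betw \<tau> (pts r) (pts r)" and t0: "\<tau> {} = {}" and c: "c \<in> S_code r \<tau>"
    and l: "card (Lp c) < 4" and rr: "card (Rp c) < 4"
  shows "c = {} \<or> c \<in> SQS r \<tau>"
proof -
  note SC = S_char[of \<tau> r, OF t0 tau_pts[OF bt]]
  from c have h: "c \<subseteq> coords r" "even (card (Lp c))" "even (card (Rp c))" "vsum (Rp c) = \<tau> (vsum (Lp c))"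
    by (auto simp: SC)
  have pl: "Lp c \<subseteq> pts r" and pr: "Rp c \<subseteq> pts r" using h(1) sub_coords by auto
  have fl: "finite (Lp c)" and fr: "finite (Rp c)" using finite_subset[OF pl finite_pts] finite_subset[OF pr finite_pts] by auto
  have cl: "card (Lp c) = 0 \<or> card (Lp c) = 2" using small_cases h(2) l by blast
  have cr: "card (Rp c) = 0 \<or> card (Rp c) = 2" using small_cases h(3) rr by blast
  show ?thesis
  proof (cases "card (Lp c) = 0")
    case L0: True
    then have le: "Lp c = {}" using fl by simp
    show ?thesis
    proof (cases "card (Rp c) = 0")
      case True
      then have "Rp c = {}" using fr by simp
      then show ?thesis using decomp[of c] unfolding le \<open>Rp c = {}\<close> by simp
    next
      case False
      then obtain b d where "Rp c = {b,d}" "b \<noteq> d" using cr by (auto simp: card_2_iff)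
      then show ?thesis using h(4) le t0 by (simp add: vsum_two vadd_eq_empty)
    qed
  next
    case False
    then obtain a a' where la: "Lp c = {a,a'}" "a \<noteq> a'" using cl by (auto simp: card_2_iff)
    have ap: "a \<in> pts r" "a' \<in> pts r" using la pl by auto
    have nz: "\<tau> (vadd a a') \<noteq> {}" using tau_zero[OF bt t0 vadd_pts[OF ap]] la by (simp add: vadd_eq_empty)
    show ?thesis
    proof (cases "card (Rp c) = 0")
      case True
      then have "Rp c = {}" using fr by simp
      then show ?thesis using h(4) la nz by (simp add: vsum_two)
    next
      case False
      then obtain b d where rb: "Rp c = {b,d}" "b \<noteq> d" using cr by (auto simp: card_2_iff)
      have bp: "b \<in> pts r" "d \<in> pts r" using rb pr by auto
      have e: "\<tau> (vadd a a') = vadd b d" using h(4) la rb by (simp add: vsum_two)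
      have "c = Inl ` {a,a'} \<union> Inr ` {b,d}" using decomp[of c] unfolding la(1) rb(1) .
      then have "c \<in> Qtau r \<tau>" unfolding Qtau_def using ap bp e nz by blast
      then show ?thesis by (simp add: SQS_def)
    qed
  qed
qed

lemma S_four:
  assumes bt: "bij_betw \<tau> (pts r) (pts r)" and t0: "\<tau> {} = {}" and c: "c \<in> S_code r \<tau>"
    and c4: "card c = 4"
  shows "c \<in> SQS r \<tau>"
proof -
  note SC = S_char[of \<tau> r, OF t0 tau_pts[OF bt]]
  from c have h: "c \<subseteq> coords r" "even (card (Lp c))" "even (card (Rp c))" "vsum (Rp c) = \<tau> (vsum (Lp c))"
    by (auto simp: SC)
  have pl: "Lp c \<subseteq> pts r" and pr: "Rp c \<subseteq> pts r" using h(1) sub_coords by auto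
  have fl: "finite (Lp c)" and fr: "finite (Rp c)" using finite_subset[OF pl finite_pts] finite_subset[OF pr finite_pts] by auto
  have sum: "card (Lp c) + card (Rp c) = 4" using card_LR[OF h(1)] c4 by simp
  show ?thesis
  proof (cases "4 \<le> card (Lp c)")
    case True
    then have l4: "card (Lp c) = 4" and "card (Rp c) = 0" using sum by auto
    then have re: "Rp c = {}" using fr by simp
    have vp: "vsum (Lp c) \<in> pts r" using pl vsum_pts by blast
    have v0: "vsum (Lp c) = {}" using h(4) re tau_zero[OF bt t0 vp] by simp
    obtain a b cc d where ld: "Lp c = {a,b,cc,d}" and d: "a\<noteq>b" "a\<noteq>cc" "a\<noteq>d" "b\<noteq>cc" "b\<noteq>d" "cc\<noteq>d"
      by (rule card4[OF l4])
    have pp: "a \<in> pts r" "b \<in> pts r" "cc \<in> pts r" "d \<in> pts r" using ld pl by auto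
    have "vadd (vadd a b) (vadd cc d) = {}" using v0 ld vsum_four[OF d] by simp
    moreover have "c = Inl ` {a,b,cc,d}" using decomp[of c] unfolding ld re by simp
    ultimately have "c \<in> Q0 r" unfolding Q0_def using pp d by blast
    then show ?thesis by (simp add: SQS_def)
  next
    case F1: False
    show ?thesis
    proof (cases "4 \<le> card (Rp c)")
      case True
      then have r4: "card (Rp c) = 4" and "card (Lp c) = 0" using sum by auto
      then have le: "Lp c = {}" using fl by simp
      have v0: "vsum (Rp c) = {}" using h(4) le t0 by simp
      obtain a b cc d where ld: "Rp c = {a,b,cc,d}" and d: "a\<noteq>b" "a\<noteq>cc" "a\<noteq>d" "b\<noteq>cc" "b\<noteq>d" "cc\<noteq>d"
        by (rule card4[OF r4])
      have pp: "a \<in> pts r" "b \<in> pts r" "cc \<in> pts r" "d \<in> pts r" using ld pr by auto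
      have "vadd (vadd a b) (vadd cc d) = {}" using v0 ld vsum_four[OF d] by simp
      moreover have "c = Inr ` {a,b,cc,d}" using decomp[of c] unfolding ld le by simp
      ultimately have "c \<in> Q1 r" unfolding Q1_def using pp d by blast
      then show ?thesis by (simp add: SQS_def)
    next
      case False
      then have "c = {} \<or> c \<in> SQS r \<tau>" using S_small[OF bt t0 c] F1 by simp
      moreover have "c \<noteq> {}" using c4 by (intro notI) simp
      ultimately show ?thesis by blast
    qed
  qed
qed

definition kern :: "(nat set + nat set) set set \<Rightarrow> (nat set + nat set) set \<Rightarrow> bool" where
  "kern S b \<longleftrightarrow> (\<forall>c\<in>S. vadd b c \<in> S)"

definition closedb :: "(nat set + nat set) set set \<Rightarrow> (nat set + nat set) set \<Rightarrow> bool" where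
  "closedb B b \<longleftrightarrow> b \<in> B \<and> (\<forall>b'\<in>B. card (b \<inter> b') = 2 \<longrightarrow> vadd b b' \<in> B)"

lemma fin_Lp: "c \<subseteq> coords r \<Longrightarrow> finite (Lp c)" "c \<subseteq> coords r \<Longrightarrow> finite (Rp c)"
  using sub_coords[of c r] finite_subset[of _ "pts r"] by auto

lemma Q0_kern:
  assumes bt: "bij_betw \<tau> (pts r) (pts r)" and t0: "\<tau> {} = {}" and b: "b \<in> Q0 r"
  shows "kern (S_code r \<tau>) b"
proof -
  note SC = S_char[of \<tau> r, OF t0 tau_pts[OF bt]]
  obtain p q s t where bq: "b = Inl ` {p,q,s,t}" and pp: "p \<in> pts r" "q \<in> pts r" "s \<in> pts r" "t \<in> pts r"
    and d: "p \<noteq> q" "p \<noteq> s" "p \<noteq> t" "q \<noteq> s" "q \<noteq> t" "s \<noteq> t"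
    and z: "vadd (vadd p q) (vadd s t) = {}" using b unfolding Q0_def by blast
  have Lb: "Lp b = {p,q,s,t}" "Rp b = {}" unfolding bq by (simp_all only: Lp_conc)
  have fL: "finite {p,q,s,t}" by simp
  have cL: "card {p,q,s,t} = 4" using d by simp
  have vL: "vsum {p,q,s,t} = {}" using vsum_four[OF d] z by simp
  have bc: "b \<subseteq> coords r" using bq pp by (auto simp: coords_def)
  show ?thesis unfolding kern_def
  proof
    fix c assume c: "c \<in> S_code r \<tau>"
    then have h: "c \<subseteq> coords r" "even (card (Lp c))" "even (card (Rp c))" "vsum (Rp c) = \<tau> (vsum (Lp c))"
      by (auto simp: SC)
    have fl: "finite (Lp c)" using fin_Lp h(1) by blast
    have s: "vadd b c \<subseteq> coords r" using vadd_sub[of b c] bc h(1) by blast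
    have L: "Lp (vadd b c) = vadd {p,q,s,t} (Lp c)" "Rp (vadd b c) = Rp c" by (simp_all add: Lp_vadd Lb)
    have e: "even (card (vadd {p,q,s,t} (Lp c)))" using even_card_vadd[OF fL fl] cL h(2) by simp
    have v: "vsum (vadd {p,q,s,t} (Lp c)) = vsum (Lp c)" using vsum_vadd[OF fL fl] vL by simp
    show "vadd b c \<in> S_code r \<tau>" using s L e v h by (simp add: SC)
  qed
qed

lemma Q1_kern:
  assumes bt: "bij_betw \<tau> (pts r) (pts r)" and t0: "\<tau> {} = {}" and b: "b \<in> Q1 r"
  shows "kern (S_code r \<tau>) b"
proof -
  note SC = S_char[of \<tau> r, OF t0 tau_pts[OF bt]]
  obtain p q s t where bq: "b = Inr ` {p,q,s,t}" and pp: "p \<in> pts r" "q \<in> pts r" "s \<in> pts r" "t \<in> pts r"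
    and d: "p \<noteq> q" "p \<noteq> s" "p \<noteq> t" "q \<noteq> s" "q \<noteq> t" "s \<noteq> t"
    and z: "vadd (vadd p q) (vadd s t) = {}" using b unfolding Q1_def by blast
  have Lb: "Rp b = {p,q,s,t}" "Lp b = {}" unfolding bq by (simp_all only: Lp_conc)
  have fL: "finite {p,q,s,t}" by simp
  have cL: "card {p,q,s,t} = 4" using d by simp
  have vL: "vsum {p,q,s,t} = {}" using vsum_four[OF d] z by simp
  have bc: "b \<subseteq> coords r" using bq pp by (auto simp: coords_def)
  show ?thesis unfolding kern_def
  proof
    fix c assume c: "c \<in> S_code r \<tau>"
    then have h: "c \<subseteq> coords r" "even (card (Lp c))" "even (card (Rp c))" "vsum (Rp c) = \<tau> (vsum (Lp c))"
      by (auto simp: SC)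
    have fl: "finite (Rp c)" using fin_Lp h(1) by blast
    have s: "vadd b c \<subseteq> coords r" using vadd_sub[of b c] bc h(1) by blast
    have L: "Rp (vadd b c) = vadd {p,q,s,t} (Rp c)" "Lp (vadd b c) = Lp c" by (simp_all add: Lp_vadd Lb)
    have e: "even (card (vadd {p,q,s,t} (Rp c)))" using even_card_vadd[OF fL fl] cL h(3) by simp
    have v: "vsum (vadd {p,q,s,t} (Rp c)) = vsum (Rp c)" using vsum_vadd[OF fL fl] vL by simp
    show "vadd b c \<in> S_code r \<tau>" using s L e v h by (simp add: SC)
  qed
qed

lemma Qtau_kern:
  assumes bt: "bij_betw \<tau> (pts r) (pts r)" and t0: "\<tau> {} = {}" and b: "b \<in> Qtau r \<tau>"
    and cl: "closedb (SQS r \<tau>) b"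
  shows "kern (S_code r \<tau>) b"
proof -
  note SC = S_char[of \<tau> r, OF t0 tau_pts[OF bt]]
  obtain a bb c d where bq: "b = Inl ` {a,c} \<union> Inr ` {bb,d}" and ap: "a \<in> pts r" "bb \<in> pts r" "c \<in> pts r" "d \<in> pts r"
    and e: "\<tau> (vadd a c) = vadd bb d" and nz: "vadd bb d \<noteq> {}" using b unfolding Qtau_def by blast
  define u where "u = vadd a c"
  have up: "u \<in> pts r" using ap u_def vadd_pts by blast
  have tu: "\<tau> u = vadd bb d" using e u_def by simp
  have u0: "u \<noteq> {}" using tu nz t0 by auto
  have cdef: "c = vadd a u" using u_def by (simp add: vadd_left)
  have ddef: "d = vadd bb (\<tau> u)" using tu by (simp add: vadd_left)
  have ac: "a \<noteq> c" using u0 u_def by auto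
  have bd: "bb \<noteq> d" using nz by auto
  have bsub: "b \<in> SQS r \<tau>" using b by (simp add: SQS_def)
  have lin: "\<tau> (vadd u w) = vadd (\<tau> u) (\<tau> w)" if wp: "w \<in> pts r" for w
  proof (cases "w = {} \<or> w = u")
    case True then show ?thesis using t0 by (elim disjE) simp_all
  next
    case False
    then have w0: "w \<noteq> {}" and wu: "w \<noteq> u" by auto
    have tw: "\<tau> w \<in> pts r" using tau_pts[OF bt wp] .
    have tw0: "\<tau> w \<noteq> {}" using tau_zero[OF bt t0 wp] w0 by simp
    have tuw: "\<tau> u \<noteq> \<tau> w" using tau_inj[OF bt up wp] wu by simp
    define c' where "c' = vadd a w"
    define d' where "d' = vadd bb (\<tau> w)"
    have c'p: "c' \<in> pts r" using c'_def vadd_pts ap(1) wp by blast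
    have d'p: "d' \<in> pts r" using d'_def vadd_pts ap(2) tw by blast
    have e': "\<tau> (vadd a c') = vadd bb d'" by (simp add: c'_def d'_def vadd_left)
    have nz': "vadd bb d' \<noteq> {}" using tw0 by (simp add: d'_def vadd_left)
    define b' where "b' = Inl ` {a,c'} \<union> Inr ` {bb,d'}"
    have b'Q: "b' \<in> Qtau r \<tau>" unfolding Qtau_def b'_def using ap(1) ap(2) c'p d'p e' nz' by blast
    have b'S: "b' \<in> SQS r \<tau>" using b'Q by (simp add: SQS_def)
    have n1: "c' \<noteq> a" using vadd_cancel[of a w "{}"] w0 c'_def by auto
    have n2: "c' \<noteq> c" using vadd_cancel[of a w u] wu c'_def cdef by auto
    have n3: "d' \<noteq> bb" using vadd_cancel[of bb "\<tau> w" "{}"] tw0 d'_def by auto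
    have n4: "d' \<noteq> d" using vadd_cancel[of bb "\<tau> w" "\<tau> u"] tuw d'_def ddef by auto
    have int: "b \<inter> b' = {Inl a, Inr bb}" using n1 n2 n3 n4 ac bd unfolding bq b'_def by auto
    have "card (b \<inter> b') = 2" unfolding int by simp
    then have vS: "vadd b b' \<in> SQS r \<tau>" using cl b'S unfolding closedb_def by blast
    have L1: "Lp (vadd b b') = {c, c'}" unfolding Lp_vadd bq b'_def Lp_conc
      using n1 n2 ac by (auto simp: vadd_def)
    have R1: "Rp (vadd b b') = {d, d'}" unfolding Lp_vadd bq b'_def Lp_conc
      using n3 n4 bd by (auto simp: vadd_def)
    have "vadd b b' \<in> S_code r \<tau>" using SQS_S[OF bt t0 vS] by simp
    then have "vsum (Rp (vadd b b')) = \<tau> (vsum (Lp (vadd b b')))" by (simp add: SC)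
    then have "vadd d d' = \<tau> (vadd c c')" unfolding L1 R1 using n2 n4 by (simp add: vsum_two)
    moreover have "vadd c c' = vadd u w" unfolding cdef c'_def by (auto simp: vadd_def)
    moreover have "vadd d d' = vadd (\<tau> u) (\<tau> w)" unfolding ddef d'_def by (auto simp: vadd_def)
    ultimately show ?thesis by simp
  qed
  show ?thesis unfolding kern_def
  proof
    fix x assume x: "x \<in> S_code r \<tau>"
    then have h: "x \<subseteq> coords r" "even (card (Lp x))" "even (card (Rp x))" "vsum (Rp x) = \<tau> (vsum (Lp x))"
      by (auto simp: SC)
    have fl: "finite (Lp x)" and fr: "finite (Rp x)" using fin_Lp h(1) by blast+
    have bc: "b \<subseteq> coords r" using bsub SQS_coords by blast
    have sub: "vadd b x \<subseteq> coords r" using vadd_sub[of b x] bc h(1) by blast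
    have L: "Lp (vadd b x) = vadd {a,c} (Lp x)" "Rp (vadd b x) = vadd {bb,d} (Rp x)"
      unfolding Lp_vadd bq by (simp_all only: Lp_conc)
    have e1: "even (card (vadd {a,c} (Lp x)))" using even_card_vadd[OF _ fl, of "{a,c}"] ac h(2) by simp
    have e2: "even (card (vadd {bb,d} (Rp x)))" using even_card_vadd[OF _ fr, of "{bb,d}"] bd h(3) by simp
    have vp: "vsum (Lp x) \<in> pts r" using vsum_pts h(1) sub_coords by blast
    have "vsum (vadd {bb,d} (Rp x)) = vadd (vadd bb d) (vsum (Rp x))"
      using vsum_vadd[of "{bb,d}" "Rp x"] fr vsum_two[OF bd] by simp
    also have "\<dots> = vadd (\<tau> u) (\<tau> (vsum (Lp x)))" using tu h(4) by simp
    also have "\<dots> = \<tau> (vadd u (vsum (Lp x)))" using lin[OF vp] by simp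
    also have "\<dots> = \<tau> (vsum (vadd {a,c} (Lp x)))"
      using vsum_vadd[of "{a,c}" "Lp x"] fl vsum_two[OF ac] u_def by simp
    finally have v: "vsum (vadd {bb,d} (Rp x)) = \<tau> (vsum (vadd {a,c} (Lp x)))" .
    show "vadd b x \<in> S_code r \<tau>" using sub L e1 e2 v by (simp add: SC)
  qed
qed

lemma kern_closed:
  assumes bt: "bij_betw \<tau> (pts r) (pts r)" and t0: "\<tau> {} = {}" and b: "b \<in> SQS r \<tau>"
    and k: "kern (S_code r \<tau>) b"
  shows "closedb (SQS r \<tau>) b"
  unfolding closedb_def
proof (intro conjI ballI impI)
  show "b \<in> SQS r \<tau>" by (rule b)
  fix b' assume b': "b' \<in> SQS r \<tau>" and c2: "card (b \<inter> b') = 2"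
  have b'S: "b' \<in> S_code r \<tau>" and cb': "card b' = 4" using SQS_S[OF bt t0 b'] by auto
  have cb: "card b = 4" using SQS_S[OF bt t0 b] by auto
  have vS: "vadd b b' \<in> S_code r \<tau>" using k b'S unfolding kern_def by blast
  have fb: "finite b" using SQS_coords[OF b] finite_subset[of b "coords r"] by simp
  have fb': "finite b'" using SQS_coords[OF b'] finite_subset[of b' "coords r"] by simp
  have "card (vadd b b') = 4" using card_vadd[OF fb fb'] c2 cb cb' by simp
  then show "vadd b b' \<in> SQS r \<tau>" using S_four[OF bt t0 vS] by blast
qed

lemma closed_kern:
  assumes bt: "bij_betw \<tau> (pts r) (pts r)" and t0: "\<tau> {} = {}"
    and cl: "closedb (SQS r \<tau>) b"
  shows "kern (S_code r \<tau>) b"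
proof -
  have "b \<in> Q0 r \<or> b \<in> Q1 r \<or> b \<in> Qtau r \<tau>" using cl by (simp add: closedb_def SQS_def)
  then show ?thesis using Q0_kern[OF bt t0] Q1_kern[OF bt t0] Qtau_kern[OF bt t0 _ cl] by blast
qed

lemma image_vadd: "inj_on f C \<Longrightarrow> A \<subseteq> C \<Longrightarrow> B \<subseteq> C \<Longrightarrow> f ` (vadd A B) = vadd (f ` A) (f ` B)"
proof -
  assume i: "inj_on f C" and a: "A \<subseteq> C" and b: "B \<subseteq> C"
  have "f ` (A - B) = f ` A - f ` B" by (rule inj_on_image_set_diff[OF i]) (use a b in auto)
  moreover have "f ` (B - A) = f ` B - f ` A" by (rule inj_on_image_set_diff[OF i]) (use a b in auto)
  ultimately show ?thesis unfolding vadd_def image_Un by simp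
qed

lemma closed_transfer:
  assumes bp: "bij_betw \<pi> (coords r) (coords r)" and im: "(\<lambda>q. \<pi> ` q) ` SQS r \<tau> = SQS r \<tau>'"
    and cl: "closedb (SQS r \<tau>) b"
  shows "closedb (SQS r \<tau>') (\<pi> ` b)"
  unfolding closedb_def
proof (intro conjI ballI impI)
  have inj: "inj_on \<pi> (coords r)" using bp bij_betw_imp_inj_on by blast
  have b: "b \<in> SQS r \<tau>" using cl closedb_def by blast
  have bc: "b \<subseteq> coords r" using b SQS_coords by blast
  have "(\<lambda>q. \<pi> ` q) b \<in> (\<lambda>q. \<pi> ` q) ` SQS r \<tau>" using b by (rule imageI)
  then show "\<pi> ` b \<in> SQS r \<tau>'" using im by simp
  fix b' assume b': "b' \<in> SQS r \<tau>'" and c2: "card (\<pi> ` b \<inter> b') = 2"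
  obtain b0 where b0: "b0 \<in> SQS r \<tau>" and e: "b' = \<pi> ` b0" using b' im by blast
  have b0c: "b0 \<subseteq> coords r" using b0 SQS_coords by blast
  have "\<pi> ` b \<inter> b' = \<pi> ` (b \<inter> b0)" using inj_on_image_Int[OF inj bc b0c] e by simp
  moreover have "card (\<pi> ` (b \<inter> b0)) = card (b \<inter> b0)"
    using card_image[OF inj_on_subset[OF inj]] bc by blast
  ultimately have "card (b \<inter> b0) = 2" using c2 by simp
  then have "vadd b b0 \<in> SQS r \<tau>" using cl b0 unfolding closedb_def by blast
  then have "(\<lambda>q. \<pi> ` q) (vadd b b0) \<in> (\<lambda>q. \<pi> ` q) ` SQS r \<tau>" by (rule imageI)
  then have "\<pi> ` (vadd b b0) \<in> SQS r \<tau>'" using im by simp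
  moreover have "\<pi> ` (vadd b b0) = vadd (\<pi> ` b) b'" using image_vadd[OF inj bc b0c] e by simp
  ultimately show "vadd (\<pi> ` b) b' \<in> SQS r \<tau>'" by simp
qed

lemma main_incl:
  assumes bt: "bij_betw \<tau> (pts r) (pts r)" and t0: "\<tau> {} = {}"
    and bt': "bij_betw \<tau>' (pts r) (pts r)" and t0': "\<tau>' {} = {}"
    and bp: "bij_betw \<pi> (coords r) (coords r)" and im: "(\<lambda>q. \<pi> ` q) ` SQS r \<tau> = SQS r \<tau>'"
  shows "c \<in> S_code r \<tau> \<Longrightarrow> \<pi> ` c \<in> S_code r \<tau>'"
proof (induction "card c" arbitrary: c rule: less_induct)
  case less
  note SC = S_char[of \<tau> r, OF t0 tau_pts[OF bt]]
  note SC' = S_char[of \<tau>' r, OF t0' tau_pts[OF bt']]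
  have inj: "inj_on \<pi> (coords r)" using bp bij_betw_imp_inj_on by blast
  from less.prems have h: "c \<subseteq> coords r" "even (card (Lp c))" "even (card (Rp c))"
    "vsum (Rp c) = \<tau> (vsum (Lp c))" by (auto simp: SC)
  have pl: "Lp c \<subseteq> pts r" and pr: "Rp c \<subseteq> pts r" using h(1) sub_coords by auto
  have fl: "finite (Lp c)" and fr: "finite (Rp c)" using fin_Lp h(1) by blast+
  have fc: "finite c" using finite_subset[OF h(1) finite_coords] .
  have step: "\<pi> ` c \<in> S_code r \<tau>'"
    if bS: "b \<in> SQS r \<tau>" and bk: "kern (S_code r \<tau>) b" and lt: "card (vadd b c) < card c" for b
  proof -
    have c': "vadd b c \<in> S_code r \<tau>" using bk less.prems unfolding kern_def by blast
    have IH: "\<pi> ` vadd b c \<in> S_code r \<tau>'" using less.hyps[OF lt c'] .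
    have bc: "b \<subseteq> coords r" using bS SQS_coords by blast
    have c'c: "vadd b c \<subseteq> coords r" using vadd_sub[of b c] bc h(1) by blast
    have "closedb (SQS r \<tau>) b" using kern_closed[OF bt t0 bS bk] .
    then have cl': "closedb (SQS r \<tau>') (\<pi> ` b)" using closed_transfer[OF bp im] by blast
    then have k': "kern (S_code r \<tau>') (\<pi> ` b)" using closed_kern[OF bt' t0'] by blast
    have "vadd (\<pi> ` b) (\<pi> ` vadd b c) \<in> S_code r \<tau>'" using k' IH unfolding kern_def by blast
    moreover have "vadd (\<pi> ` b) (\<pi> ` vadd b c) = \<pi> ` (vadd b (vadd b c))"
      using image_vadd[OF inj bc c'c] by simp
    ultimately show ?thesis by (simp add: vadd_left)
  qed
  show ?case
  proof (cases "4 \<le> card (Lp c)")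
    case True
    then have "3 \<le> card (Lp c)" by simp
    then obtain p q s where pq: "p \<in> Lp c" "q \<in> Lp c" "s \<in> Lp c" "p\<noteq>q" "p\<noteq>s" "q\<noteq>s"
      by (rule three_elems[OF fl])
    define t where "t = vadd (vadd p q) s"
    have ppts: "p \<in> pts r" "q \<in> pts r" "s \<in> pts r" using pq pl by auto
    have tpt: "t \<in> pts r" using t_def vadd_pts ppts by simp
    have t1: "vadd p t = vadd q s" unfolding t_def by (auto simp: vadd_def)
    have t2: "vadd q t = vadd p s" unfolding t_def by (auto simp: vadd_def)
    have t3: "vadd s t = vadd p q" unfolding t_def by (auto simp: vadd_def)
    have tp1: "p \<noteq> t" using t1 pq(6) by (metis vadd_empty(3) vadd_eq_empty)
    have tp2: "q \<noteq> t" using t2 pq(5) by (metis vadd_empty(3) vadd_eq_empty)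
    have tp3: "s \<noteq> t" using t3 pq(4) by (metis vadd_empty(3) vadd_eq_empty)
    note tp = tp1 tp2 tp3
    have z: "vadd (vadd p q) (vadd s t) = {}" using t3 by simp
    define b :: "(nat set + nat set) set" where "b = Inl ` {p,q,s,t}"
    have bQ: "b \<in> Q0 r" unfolding Q0_def b_def using ppts tpt tp pq z by blast
    have bS: "b \<in> SQS r \<tau>" using bQ by (simp add: SQS_def)
    have bk: "kern (S_code r \<tau>) b" using Q0_kern[OF bt t0 bQ] .
    have fb: "finite b" using b_def by simp
    have sub: "{Inl p, Inl q, Inl s} \<subseteq> b \<inter> c" using pq by (auto simp: b_def Lp_def)
    have "card ({Inl p, Inl q, Inl s} :: (nat set + nat set) set) = 3" using pq by simp
    then have "3 \<le> card (b \<inter> c)" using card_mono[OF _ sub] fb by simp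
    moreover have "card b = 4" using SQS_S[OF bt t0 bS] by simp
    ultimately have "card (vadd b c) < card c" using card_vadd[OF fb fc] by linarith
    then show ?thesis using step bS bk by blast
  next
    case F1: False
    show ?thesis
    proof (cases "4 \<le> card (Rp c)")
      case True
      then have "3 \<le> card (Rp c)" by simp
      then obtain p q s where pq: "p \<in> Rp c" "q \<in> Rp c" "s \<in> Rp c" "p\<noteq>q" "p\<noteq>s" "q\<noteq>s"
        by (rule three_elems[OF fr])
      define t where "t = vadd (vadd p q) s"
      have ppts: "p \<in> pts r" "q \<in> pts r" "s \<in> pts r" using pq pr by auto
      have tpt: "t \<in> pts r" using t_def vadd_pts ppts by simp
      have t1: "vadd p t = vadd q s" unfolding t_def by (auto simp: vadd_def)
      have t2: "vadd q t = vadd p s" unfolding t_def by (auto simp: vadd_def)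
      have t3: "vadd s t = vadd p q" unfolding t_def by (auto simp: vadd_def)
      have tp1: "p \<noteq> t" using t1 pq(6) by (metis vadd_empty(3) vadd_eq_empty)
      have tp2: "q \<noteq> t" using t2 pq(5) by (metis vadd_empty(3) vadd_eq_empty)
      have tp3: "s \<noteq> t" using t3 pq(4) by (metis vadd_empty(3) vadd_eq_empty)
      note tp = tp1 tp2 tp3
      have z: "vadd (vadd p q) (vadd s t) = {}" using t3 by simp
      define b :: "(nat set + nat set) set" where "b = Inr ` {p,q,s,t}"
      have bQ: "b \<in> Q1 r" unfolding Q1_def b_def using ppts tpt tp pq z by blast
      have bS: "b \<in> SQS r \<tau>" using bQ by (simp add: SQS_def)
      have bk: "kern (S_code r \<tau>) b" using Q1_kern[OF bt t0 bQ] .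
      have fb: "finite b" using b_def by simp
      have sub: "{Inr p, Inr q, Inr s} \<subseteq> b \<inter> c" using pq by (auto simp: b_def Rp_def)
      have "card ({Inr p, Inr q, Inr s} :: (nat set + nat set) set) = 3" using pq by simp
      then have "3 \<le> card (b \<inter> c)" using card_mono[OF _ sub] fb by simp
      moreover have "card b = 4" using SQS_S[OF bt t0 bS] by simp
      ultimately have "card (vadd b c) < card c" using card_vadd[OF fb fc] by linarith
      then show ?thesis using step bS bk by blast
    next
      case False
      then have "c = {} \<or> c \<in> SQS r \<tau>" using S_small[OF bt t0 less.prems] F1 by simp
      then show ?thesis
      proof
        assume "c = {}" then show ?thesis using t0' by (simp add: SC')
      next
        assume "c \<in> SQS r \<tau>"
        then have "(\<lambda>q. \<pi> ` q) c \<in> (\<lambda>q. \<pi> ` q) ` SQS r \<tau>" by (rule imageI)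
        then have "\<pi> ` c \<in> SQS r \<tau>'" using im by simp
        then show ?thesis using SQS_S[OF bt' t0'] by blast
      qed
    qed
  qed
qed

theorem corollary3:
  fixes r :: nat and \<tau> \<tau>' :: "nat set \<Rightarrow> nat set"
  assumes "r \<ge> 1"
    and "bij_betw \<tau> (pts r) (pts r)" and "\<tau> {} = {}"
    and "bij_betw \<tau>' (pts r) (pts r)" and "\<tau>' {} = {}"
    and "transitive_code r (S_code r \<tau>)" and "transitive_code r (S_code r \<tau>')"
  shows "(\<exists>x \<pi>. x \<subseteq> coords r \<and> bij_betw \<pi> (coords r) (coords r)
            \<and> isom_map x \<pi> ` S_code r \<tau> = S_code r \<tau>')
     \<longleftrightarrow> (\<exists>\<pi>'. bij_betw \<pi>' (coords r) (coords r)
            \<and> (\<lambda>q. \<pi>' ` q) ` SQS r \<tau> = SQS r \<tau>')"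
proof
  note bt = assms(2) and t0 = assms(3) and bt' = assms(4) and t0' = assms(5)
  note SC = S_char[of \<tau> r, OF t0 tau_pts[OF bt]]
  note SC' = S_char[of \<tau>' r, OF t0' tau_pts[OF bt']]
  have e0: "{} \<in> S_code r \<tau>" using t0 by (simp add: SC)
  have e0': "{} \<in> S_code r \<tau>'" using t0' by (simp add: SC')
  assume "\<exists>x \<pi>. x \<subseteq> coords r \<and> bij_betw \<pi> (coords r) (coords r)
            \<and> isom_map x \<pi> ` S_code r \<tau> = S_code r \<tau>'"
  then obtain x \<pi> where xc: "x \<subseteq> coords r" and bp: "bij_betw \<pi> (coords r) (coords r)"
    and im: "isom_map x \<pi> ` S_code r \<tau> = S_code r \<tau>'" by blast
  have i0: "isom_map x \<pi> {} = x" by (simp add: isom_map_def)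
  have "isom_map x \<pi> {} \<in> isom_map x \<pi> ` S_code r \<tau>" using e0 by (rule imageI)
  then have xS: "x \<in> S_code r \<tau>'" using im i0 by simp
  have T: "\<forall>c\<in>S_code r \<tau>'. \<forall>d\<in>S_code r \<tau>'. \<exists>x \<pi>. x \<subseteq> coords r \<and> bij_betw \<pi> (coords r) (coords r)
        \<and> isom_map x \<pi> ` S_code r \<tau>' = S_code r \<tau>' \<and> isom_map x \<pi> c = d"
    using assms(7) unfolding transitive_code_def .
  have T1: "\<exists>z \<sigma>. z \<subseteq> coords r \<and> bij_betw \<sigma> (coords r) (coords r)
        \<and> isom_map z \<sigma> ` S_code r \<tau>' = S_code r \<tau>' \<and> isom_map z \<sigma> x = {}"
    using T xS e0' by blast
  obtain z \<sigma> where zc: "z \<subseteq> coords r" and bs: "bij_betw \<sigma> (coords r) (coords r)"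
    and ims: "isom_map z \<sigma> ` S_code r \<tau>' = S_code r \<tau>'" and zx: "isom_map z \<sigma> x = {}"
    using T1 by blast
  have injs: "inj_on \<sigma> (coords r)" using bs bij_betw_imp_inj_on by blast
  have sp: "\<pi> ` coords r = coords r" using bp bij_betw_imp_surj_on by blast
  have zeq: "z = \<sigma> ` x" using zx by (simp add: isom_map_def vadd_eq_empty)
  define \<rho> where "\<rho> = \<sigma> \<circ> \<pi>"
  have br: "bij_betw \<rho> (coords r) (coords r)" using bij_betw_trans[OF bp bs] \<rho>_def by simp
  have injr: "inj_on \<rho> (coords r)" using br bij_betw_imp_inj_on by blast
  have key: "isom_map z \<sigma> (isom_map x \<pi> y) = \<rho> ` y" if yc: "y \<subseteq> coords r" for y
  proof -
    have py: "\<pi> ` y \<subseteq> coords r" using yc sp by blast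
    have "\<sigma> ` (vadd x (\<pi> ` y)) = vadd (\<sigma> ` x) (\<sigma> ` \<pi> ` y)" using image_vadd[OF injs xc py] .
    then show ?thesis by (simp add: isom_map_def zeq \<rho>_def image_comp vadd_left)
  qed
  have Sc: "\<And>y. y \<in> S_code r \<tau> \<Longrightarrow> y \<subseteq> coords r" using SC by blast
  have Sc': "\<And>y. y \<in> S_code r \<tau>' \<Longrightarrow> y \<subseteq> coords r" using SC' by blast
  have imr1: "\<rho> ` y \<in> S_code r \<tau>'" if y: "y \<in> S_code r \<tau>" for y
  proof -
    have "isom_map x \<pi> y \<in> S_code r \<tau>'" using im y by blast
    then have "isom_map z \<sigma> (isom_map x \<pi> y) \<in> S_code r \<tau>'" using ims by blast
    then show ?thesis using key[OF Sc[OF y]] by simp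
  qed
  have imr2: "\<exists>y\<in>S_code r \<tau>. w = \<rho> ` y" if w: "w \<in> S_code r \<tau>'" for w
  proof -
    obtain w' where w': "w' \<in> S_code r \<tau>'" and e1: "w = isom_map z \<sigma> w'" using w ims by blast
    obtain y where y: "y \<in> S_code r \<tau>" and e2: "w' = isom_map x \<pi> y" using w' im by blast
    show ?thesis using key[OF Sc[OF y]] e1 e2 y by blast
  qed
  show "\<exists>\<pi>'. bij_betw \<pi>' (coords r) (coords r) \<and> (\<lambda>q. \<pi>' ` q) ` SQS r \<tau> = SQS r \<tau>'"
  proof (intro exI conjI)
    show "bij_betw \<rho> (coords r) (coords r)" by (rule br)
    show "(\<lambda>q. \<rho> ` q) ` SQS r \<tau> = SQS r \<tau>'"
    proof
      show "(\<lambda>q. \<rho> ` q) ` SQS r \<tau> \<subseteq> SQS r \<tau>'"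
      proof
        fix w assume "w \<in> (\<lambda>q. \<rho> ` q) ` SQS r \<tau>"
        then obtain q where q: "q \<in> SQS r \<tau>" and w: "w = \<rho> ` q" by blast
        have qS: "q \<in> S_code r \<tau>" and c4: "card q = 4" using SQS_S[OF bt t0 q] by auto
        have "card (\<rho> ` q) = 4" using card_image[OF inj_on_subset[OF injr Sc[OF qS]]] c4 by simp
        then show "w \<in> SQS r \<tau>'" using S_four[OF bt' t0' imr1[OF qS]] w by simp
      qed
    next
      show "SQS r \<tau>' \<subseteq> (\<lambda>q. \<rho> ` q) ` SQS r \<tau>"
      proof
        fix w assume w: "w \<in> SQS r \<tau>'"
        have wS: "w \<in> S_code r \<tau>'" and c4: "card w = 4" using SQS_S[OF bt' t0' w] by auto
        obtain y where y: "y \<in> S_code r \<tau>" and e: "w = \<rho> ` y" using imr2[OF wS] by blast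
        have "card y = 4" using card_image[OF inj_on_subset[OF injr Sc[OF y]]] c4 e by simp
        then have "y \<in> SQS r \<tau>" using S_four[OF bt t0 y] by simp
        then show "w \<in> (\<lambda>q. \<rho> ` q) ` SQS r \<tau>" using e by blast
      qed
    qed
  qed
next
  note bt = assms(2) and t0 = assms(3) and bt' = assms(4) and t0' = assms(5)
  note SC = S_char[of \<tau> r, OF t0 tau_pts[OF bt]]
  note SC' = S_char[of \<tau>' r, OF t0' tau_pts[OF bt']]
  assume "\<exists>\<pi>'. bij_betw \<pi>' (coords r) (coords r) \<and> (\<lambda>q. \<pi>' ` q) ` SQS r \<tau> = SQS r \<tau>'"
  then obtain \<pi> where bp: "bij_betw \<pi> (coords r) (coords r)"
    and im: "(\<lambda>q. \<pi> ` q) ` SQS r \<tau> = SQS r \<tau>'" by blast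
  have inc1: "\<And>c. c \<in> S_code r \<tau> \<Longrightarrow> \<pi> ` c \<in> S_code r \<tau>'"
    using main_incl[OF bt t0 bt' t0' bp im] .
  define \<iota> where "\<iota> = inv_into (coords r) \<pi>"
  have bi: "bij_betw \<iota> (coords r) (coords r)" using bij_betw_inv_into[OF bp] \<iota>_def by simp
  have inj: "inj_on \<pi> (coords r)" using bp bij_betw_imp_inj_on by blast
  have sp: "\<pi> ` coords r = coords r" using bp bij_betw_imp_surj_on by blast
  have canc1: "\<iota> ` \<pi> ` q = q" if "q \<subseteq> coords r" for q
    unfolding \<iota>_def using inv_into_image_cancel[OF inj that] .
  have canc2: "\<pi> ` \<iota> ` q = q" if "q \<subseteq> coords r" for q
    unfolding \<iota>_def using image_inv_into_cancel[OF sp that] .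
  have imi: "(\<lambda>q. \<iota> ` q) ` SQS r \<tau>' = SQS r \<tau>"
  proof
    show "(\<lambda>q. \<iota> ` q) ` SQS r \<tau>' \<subseteq> SQS r \<tau>"
    proof
      fix w assume "w \<in> (\<lambda>q. \<iota> ` q) ` SQS r \<tau>'"
      then obtain q' where q': "q' \<in> SQS r \<tau>'" and w: "w = \<iota> ` q'" by blast
      obtain q where q: "q \<in> SQS r \<tau>" and e: "q' = \<pi> ` q" using q' im by blast
      show "w \<in> SQS r \<tau>" using w e canc1[OF SQS_coords[OF q]] q by simp
    qed
  next
    show "SQS r \<tau> \<subseteq> (\<lambda>q. \<iota> ` q) ` SQS r \<tau>'"
    proof
      fix q assume q: "q \<in> SQS r \<tau>"
      have "(\<lambda>q. \<pi> ` q) q \<in> (\<lambda>q. \<pi> ` q) ` SQS r \<tau>" using q by (rule imageI)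
      then have "\<pi> ` q \<in> SQS r \<tau>'" using im by simp
      moreover have "q = \<iota> ` \<pi> ` q" using canc1[OF SQS_coords[OF q]] by simp
      ultimately show "q \<in> (\<lambda>q. \<iota> ` q) ` SQS r \<tau>'" by blast
    qed
  qed
  have inc2: "\<And>c. c \<in> S_code r \<tau>' \<Longrightarrow> \<iota> ` c \<in> S_code r \<tau>"
    using main_incl[OF bt' t0' bt t0 bi imi] .
  have Sc': "\<And>y. y \<in> S_code r \<tau>' \<Longrightarrow> y \<subseteq> coords r" using SC' by blast
  have eq: "(\<lambda>c. \<pi> ` c) ` S_code r \<tau> = S_code r \<tau>'"
  proof
    show "(\<lambda>c. \<pi> ` c) ` S_code r \<tau> \<subseteq> S_code r \<tau>'" using inc1 by blast
  next
    show "S_code r \<tau>' \<subseteq> (\<lambda>c. \<pi> ` c) ` S_code r \<tau>"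
    proof
      fix w assume w: "w \<in> S_code r \<tau>'"
      have "w = \<pi> ` \<iota> ` w" using canc2[OF Sc'[OF w]] by simp
      then show "w \<in> (\<lambda>c. \<pi> ` c) ` S_code r \<tau>" using inc2[OF w] by blast
    qed
  qed
  have "isom_map {} \<pi> = (\<lambda>c. \<pi> ` c)" by (rule ext) (simp add: isom_map_def)
  then show "\<exists>x \<pi>. x \<subseteq> coords r \<and> bij_betw \<pi> (coords r) (coords r)
            \<and> isom_map x \<pi> ` S_code r \<tau> = S_code r \<tau>'"
    using bp eq by (intro exI[of _ "{}"] exI[of _ \<pi>]) simp
qed

end
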